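(* Let $(X,d)$ be a path-connected metric space, $n\geq 1$, and $\gamma:[0,1]\to X$ a path. The change-of-basepoint group isomorphism $\Gamma:\pi_n(X,\gamma(1))\to\pi_n(X,\gamma(0))$, $\Gamma([\beta])=[\gamma\ast\beta]$, is an isometry with respect to the pseudometrics $\rho$ on these groups.
   Context: Identify $n$-loops with based maps $(S^n,d_0)\to X$, $d_0=(1,0,\dots,0)$, with uniform metric $\mu(\alpha,\beta)=\sup_{t\in S^n}d(\alpha(t),\beta(t))$; for $a,b\in\pi_n(X,x)$, $\rho(a,b)=\inf\{\mu(\alpha,\beta)\mid\alpha\in a,\beta\in b\}$. Path-conjugation: fix once and for all a retraction $r:S^n\times[0,1]\to S^n\times\{0\}\cup\{d_0\}\times[0,1]$. For a path $\gamma$ and a based map $\alpha:(S^n,d_0)\to(X,\gamma(1))$, let $h:S^n\times\{0\}\cup\{d_0\}\times[0,1]\to X$ be $\alpha$ on $S^n\times\{0\}$ and $h(d_0,s)=\gamma(1-s)$; then $\gamma\ast\alpha:(S^n,d_0)\to(X,\gamma(0))$ is $t\mapsto h(r(t,1))$. *)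

theory Defs
  imports "HOL-Analysis.Analysis"
begin

text \<open>The n-sphere is modelled as the unit sphere of a Euclidean space 'a with
  DIM('a) = n+1; the base point d0 is a fixed standard basis vector.\<close>

definition nloops :: "'a::euclidean_space \<Rightarrow> 'b::metric_space set \<Rightarrow> 'b \<Rightarrow> ('a \<Rightarrow> 'b) set" where
  "nloops d0 X x = {\<alpha>. continuous_on (sphere 0 1) \<alpha> \<and> \<alpha> ` sphere 0 1 \<subseteq> X \<and> \<alpha> d0 = x}"

definition nclass :: "'a::euclidean_space \<Rightarrow> 'b::metric_space set \<Rightarrow> 'b \<Rightarrow> ('a \<Rightarrow> 'b) \<Rightarrow> ('a \<Rightarrow> 'b) set" where
  "nclass d0 X x \<alpha> = {\<beta> \<in> nloops d0 X x.
      homotopic_with_canon (\<lambda>f. f d0 = x) (sphere 0 1) X \<alpha> \<beta>}"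

definition pi_n :: "'a::euclidean_space \<Rightarrow> 'b::metric_space set \<Rightarrow> 'b \<Rightarrow> ('a \<Rightarrow> 'b) set set" where
  "pi_n d0 X x = nclass d0 X x ` nloops d0 X x"

definition umetric :: "('a::euclidean_space \<Rightarrow> 'b::metric_space) \<Rightarrow> ('a \<Rightarrow> 'b) \<Rightarrow> real" where
  "umetric \<alpha> \<beta> = (SUP t\<in>sphere 0 1. dist (\<alpha> t) (\<beta> t))"

definition rho :: "('a::euclidean_space \<Rightarrow> 'b::metric_space) set \<Rightarrow> ('a \<Rightarrow> 'b) set \<Rightarrow> real" where
  "rho a b = Inf {umetric \<alpha> \<beta> | \<alpha> \<beta>. \<alpha> \<in> a \<and> \<beta> \<in> b}"

definition conj_retraction :: "'a::euclidean_space \<Rightarrow> ('a \<times> real \<Rightarrow> 'a \<times> real) \<Rightarrow> bool" where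
  "conj_retraction d0 r \<longleftrightarrow>
     retraction (sphere 0 1 \<times> {0..1}) (sphere 0 1 \<times> {0} \<union> {d0} \<times> {0..1}) r"

definition path_conj :: "('a::euclidean_space \<times> real \<Rightarrow> 'a \<times> real) \<Rightarrow> (real \<Rightarrow> 'b) \<Rightarrow> ('a \<Rightarrow> 'b) \<Rightarrow> 'a \<Rightarrow> 'b" where
  "path_conj r \<gamma> \<alpha> t = (let (u, s) = r (t, 1) in if s = 0 then \<alpha> u else \<gamma> (1 - s))"

definition change_basepoint :: "'a::euclidean_space \<Rightarrow> 'b::metric_space set \<Rightarrow> ('a \<times> real \<Rightarrow> 'a \<times> real)
    \<Rightarrow> (real \<Rightarrow> 'b) \<Rightarrow> ('a \<Rightarrow> 'b) set \<Rightarrow> ('a \<Rightarrow> 'b) set" where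
  "change_basepoint d0 X r \<gamma> a = nclass d0 X (\<gamma> 0) (path_conj r \<gamma> (SOME \<beta>. \<beta> \<in> a))"

end

theory Submission
  imports Defs
begin

lemma hom_iff:
  assumes "d0 \<in> S"
  shows "homotopic_with_canon (\<lambda>f. f d0 = c) S T p q \<longleftrightarrow>
    (\<exists>h. continuous_on ({0..1::real}\<times>S) h \<and> h ` ({0..1}\<times>S) \<subseteq> T \<and> (\<forall>x\<in>S. h(0,x) = p x)
       \<and> (\<forall>x\<in>S. h(1,x) = q x) \<and> (\<forall>t\<in>{0..1}. h(t,d0) = c))"
  using assms
  by (subst homotopic_with) (auto simp: continuous_map_subtopology_eu prod_topology_subtopology subtopology_subtopology Times_Int_Times)

definition pasteh :: "(real \<Rightarrow> 'b) \<Rightarrow> (real \<Rightarrow> 'a \<Rightarrow> 'b) \<Rightarrow> real \<times> ('a \<times> real) \<Rightarrow> 'b" where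
  "pasteh \<gamma> K = (\<lambda>(l,(u,s)). if s = 0 then K l u else \<gamma> (1 - s))"

lemma paste_cont:
  fixes K :: "real \<Rightarrow> 'a::euclidean_space \<Rightarrow> 'b::metric_space"
  assumes K: "continuous_on ({0..1}\<times>S) (\<lambda>(l,u). K l u)"
    and Kd: "\<forall>l\<in>{0..1}. K l d0 = \<gamma> 1" and g: "continuous_on {0..1} \<gamma>"
    and S: "closed S"
  shows "continuous_on ({0..1} \<times> (S\<times>{0} \<union> {d0}\<times>{0..1})) (pasteh \<gamma> K)"
proof -
  have eq: "{0..1::real} \<times> (S\<times>{0::real} \<union> {d0}\<times>{0..1}) = {0..1} \<times> (S\<times>{0}) \<union> {0..1} \<times> ({d0}\<times>{0..1})"
    by auto
  have c1: "continuous_on ({0..1} \<times> (S\<times>{0})) (pasteh \<gamma> K)"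
  proof -
    have "continuous_on ({0..1::real} \<times> (S\<times>{0::real})) (\<lambda>p. (\<lambda>(l,u). K l u) (fst p, fst (snd p)))"
      by (rule continuous_on_compose2[OF K]) (auto intro!: continuous_intros)
    then show ?thesis
      by (rule continuous_on_eq) (auto simp: pasteh_def)
  qed
  have c2: "continuous_on ({0..1} \<times> ({d0}\<times>{0..1})) (pasteh \<gamma> K)"
  proof -
    have "continuous_on ({0..1::real} \<times> ({d0}\<times>{0..1::real})) (\<lambda>p. \<gamma> (1 - snd (snd p)))"
      by (rule continuous_on_compose2[OF g]) (auto intro!: continuous_intros)
    then show ?thesis
      by (rule continuous_on_eq) (auto simp: pasteh_def Kd)
  qed
  show ?thesis unfolding eq
    by (rule continuous_on_closed_Un[OF _ _ c1 c2]) (auto intro!: closed_Times S)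
qed

lemma retr_facts:
  assumes "conj_retraction d0 r"
  shows "continuous_on (sphere 0 1 \<times> {0..1}) r"
    and "\<And>p. p \<in> sphere 0 1 \<times> {0..1} \<Longrightarrow> r p \<in> sphere 0 1 \<times> {0} \<union> {d0} \<times> {0..1}"
    and "\<And>p. p \<in> sphere 0 1 \<times> {0} \<union> {d0} \<times> {0..1} \<Longrightarrow> r p = p"
  using assms unfolding conj_retraction_def retraction_def by auto

lemma track_lemma:
  fixes F :: "'a::euclidean_space \<times> real \<Rightarrow> 'b::metric_space"
  assumes retr: "conj_retraction d0 r" and d0: "d0 \<in> sphere 0 1"
    and Fc: "continuous_on (sphere 0 1 \<times> {0..1}) F" and FX: "F ` (sphere 0 1 \<times> {0..1}) \<subseteq> X"
    and Fd: "\<forall>\<sigma>\<in>{0..1}. F (d0, \<sigma>) = \<gamma> (1 - \<sigma>)" and F0: "\<forall>u\<in>sphere 0 1. F (u, 0) = \<alpha> u"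
  shows "homotopic_with_canon (\<lambda>f. f d0 = \<gamma> 0) (sphere 0 1) X (\<lambda>t. F (t, 1)) (path_conj r \<gamma> \<alpha>)"
proof -
  let ?S = "sphere (0::'a) 1"
  let ?T = "?S \<times> {0::real} \<union> {d0} \<times> {0..1}"
  note rc = retr_facts(1)[OF retr] and rT = retr_facts(2)[OF retr] and rid = retr_facts(3)[OF retr]
  define m where "m = (\<lambda>p::real\<times>'a. (fst (r (snd p, fst p)), (1 - fst p) + fst p * snd (r (snd p, 1))))"
  have mc: "continuous_on ({0..1} \<times> ?S) m"
  proof -
    have c1: "continuous_on ({0..1} \<times> ?S) (\<lambda>p::real\<times>'a. r (snd p, fst p))"
      by (rule continuous_on_compose2[OF rc]) (auto intro!: continuous_intros)
    have c2: "continuous_on ({0..1} \<times> ?S) (\<lambda>p::real\<times>'a. r (snd p, 1))"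
      by (rule continuous_on_compose2[OF rc]) (auto intro!: continuous_intros)
    show ?thesis unfolding m_def
      by (intro continuous_intros continuous_on_fst[OF c1] continuous_on_snd[OF c2])
  qed
  have mSp: "m (l, t) \<in> ?S \<times> {0..1}" if l: "l \<in> {0..1}" and t: "t \<in> ?S" for l t
  proof -
    have "r (t, l) \<in> ?T" using rT l t by auto
    hence a: "fst (r (t,l)) \<in> ?S" using d0 by auto
    have "r (t, 1) \<in> ?T" using rT t by auto
    hence b: "snd (r (t,1)) \<in> {0..1}" by auto
    have "0 \<le> (1 - l) + l * snd (r (t,1))" using l b by (auto intro!: add_nonneg_nonneg mult_nonneg_nonneg)
    moreover have "(1 - l) + l * snd (r (t,1)) \<le> 1"
    proof -
      have "l * snd (r (t,1)) \<le> l * 1" using l b by (intro mult_left_mono) auto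
      thus ?thesis by simp
    qed
    ultimately show "m (l, t) \<in> ?S \<times> {0..1}" using a by (auto simp: m_def)
  qed
  have mS: "m ` ({0..1} \<times> ?S) \<subseteq> ?S \<times> {0..1}" using mSp by (auto simp: image_subset_iff)
  show ?thesis
  proof (subst hom_iff[OF d0], intro exI conjI ballI)
    show "continuous_on ({0..1} \<times> ?S) (F \<circ> m)"
      by (rule continuous_on_compose[OF mc continuous_on_subset[OF Fc mS]])
    show "(F \<circ> m) ` ({0..1} \<times> ?S) \<subseteq> X" using mS FX by (force simp: image_subset_iff)
  next
    fix x assume x: "x \<in> ?S"
    have "r (x, 0) = (x, 0)" using rid x by auto
    thus "(F \<circ> m) (0, x) = F (x, 1)" by (simp add: m_def)
  next
    fix x assume x: "x \<in> ?S"
    have rx: "r (x, 1) \<in> ?T" using rT x by auto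
    obtain u s where us: "r (x, 1) = (u, s)" by fastforce
    show "(F \<circ> m) (1, x) = path_conj r \<gamma> \<alpha> x"
      using rx F0 Fd d0 by (auto simp: m_def path_conj_def us)
  next
    fix l :: real assume l: "l \<in> {0..1}"
    have "r (d0, l) = (d0, l)" "r (d0, 1) = (d0, 1)" using rid l by auto
    thus "(F \<circ> m) (l, d0) = \<gamma> 0" using Fd by (simp add: m_def)
  qed
qed

lemma pc_pasteh: "path_conj r \<gamma> \<alpha> t = pasteh \<gamma> (\<lambda>_. \<alpha>) (l, r (t, 1))"
  by (cases "r (t, 1)") (simp add: path_conj_def pasteh_def)

lemma WD:
  fixes \<gamma> :: "real \<Rightarrow> 'b::metric_space" and d0 :: "'a::euclidean_space"
  assumes retr: "conj_retraction d0 r" and d0: "d0 \<in> sphere 0 1"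
    and g: "path \<gamma>" and gX: "path_image \<gamma> \<subseteq> X"
    and hom: "homotopic_with_canon (\<lambda>f. f d0 = \<gamma> 1) (sphere 0 1) X \<alpha> \<beta>"
  shows "homotopic_with_canon (\<lambda>f. f d0 = \<gamma> 0) (sphere 0 1) X (path_conj r \<gamma> \<alpha>) (path_conj r \<gamma> \<beta>)"
proof -
  let ?S = "sphere (0::'a) 1"
  let ?T = "?S \<times> {0::real} \<union> {d0} \<times> {0..1}"
  note rc = retr_facts(1)[OF retr] and rT = retr_facts(2)[OF retr] and rid = retr_facts(3)[OF retr]
  obtain H where Hc: "continuous_on ({0..1::real}\<times>?S) H" and HX: "H ` ({0..1}\<times>?S) \<subseteq> X"
    and H0: "\<forall>x\<in>?S. H(0,x) = \<alpha> x" and H1: "\<forall>x\<in>?S. H(1,x) = \<beta> x" and Hd: "\<forall>t\<in>{0..1}. H(t,d0) = \<gamma> 1"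
    using hom unfolding hom_iff[OF d0] by blast
  define K where "K = (\<lambda>l u. H (l, u))"
  have Kc: "continuous_on ({0..1}\<times>?S) (\<lambda>(l,u). K l u)"
    using Hc by (simp add: K_def case_prod_beta')
  have gc: "continuous_on {0..1} \<gamma>" using g by (simp add: path_def)
  have pc: "continuous_on ({0..1} \<times> ?T) (pasteh \<gamma> K)"
    by (rule paste_cont[OF Kc _ gc]) (auto simp: K_def Hd)
  have rT1: "\<exists>u s. r (t, 1) = (u, s) \<and> ((s = 0 \<and> u \<in> ?S) \<or> (u = d0 \<and> s \<in> {0..1}))" if "t \<in> ?S" for t
    using rT[of "(t,1)"] that by auto
  show ?thesis
  proof (subst hom_iff[OF d0], intro exI conjI ballI)
    show "continuous_on ({0..1} \<times> ?S) (\<lambda>p. pasteh \<gamma> K (fst p, r (snd p, 1)))"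
    proof (rule continuous_on_compose2[OF pc])
      show "continuous_on ({0..1} \<times> ?S) (\<lambda>p::real\<times>'a. (fst p, r (snd p, 1)))"
        by (intro continuous_intros continuous_on_compose2[OF rc]) auto
      show "(\<lambda>p::real\<times>'a. (fst p, r (snd p, 1))) ` ({0..1} \<times> ?S) \<subseteq> {0..1} \<times> ?T"
        using rT by force
    qed
    show "(\<lambda>p. pasteh \<gamma> K (fst p, r (snd p, 1))) ` ({0..1} \<times> ?S) \<subseteq> X"
    proof clarsimp
      fix l :: real and t :: 'a assume l: "0 \<le> l" "l \<le> 1" and t: "norm t = 1"
      then obtain u s where us: "r (t, 1) = (u, s)" and c: "(s = 0 \<and> u \<in> ?S) \<or> (u = d0 \<and> s \<in> {0..1})"
        using rT1[of t] by auto
      show "pasteh \<gamma> K (l, r (t, 1)) \<in> X"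
      proof (cases "s = 0")
        case True
        with c d0 have "u \<in> ?S" by auto
        thus ?thesis using HX l True by (force simp: us pasteh_def K_def)
      next
        case False
        with c have "s \<in> {0..1}" by auto
        hence "\<gamma> (1 - s) \<in> path_image \<gamma>" by (auto simp: path_image_def)
        thus ?thesis using gX False by (auto simp: us pasteh_def)
      qed
    qed
  next
    fix x assume x: "x \<in> ?S"
    then obtain u s where us: "r (x, 1) = (u, s)" and c: "(s = 0 \<and> u \<in> ?S) \<or> (u = d0 \<and> s \<in> {0..1})"
      using rT1[of x] by auto
    show "pasteh \<gamma> K (fst (0, x), r (snd (0, x), 1)) = path_conj r \<gamma> \<alpha> x"
      using c H0 d0 by (auto simp: us pasteh_def K_def path_conj_def)
  next
    fix x assume x: "x \<in> ?S"
    then obtain u s where us: "r (x, 1) = (u, s)" and c: "(s = 0 \<and> u \<in> ?S) \<or> (u = d0 \<and> s \<in> {0..1})"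
      using rT1[of x] by auto
    show "pasteh \<gamma> K (fst (1, x), r (snd (1, x), 1)) = path_conj r \<gamma> \<beta> x"
      using c H1 d0 by (auto simp: us pasteh_def K_def path_conj_def)
  next
    fix l :: real assume l: "l \<in> {0..1}"
    have "r (d0, 1) = (d0, 1)" using rid by auto
    thus "pasteh \<gamma> K (fst (l, d0), r (snd (l, d0), 1)) = \<gamma> 0" by (simp add: pasteh_def)
  qed
qed

lemma nloops_refl:
  assumes "\<alpha> \<in> nloops d0 X x"
  shows "homotopic_with_canon (\<lambda>f. f d0 = x) (sphere 0 1) X \<alpha> \<alpha>"
  using assms by (auto simp: nloops_def continuous_map_subtopology_eu)

lemma hom_nloops:
  assumes "homotopic_with_canon (\<lambda>f. f d0 = x) (sphere 0 1) X \<alpha> \<beta>"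
  shows "\<alpha> \<in> nloops d0 X x" "\<beta> \<in> nloops d0 X x"
  using homotopic_with_imp_continuous[OF assms] homotopic_with_imp_subset1[OF assms]
    homotopic_with_imp_subset2[OF assms] homotopic_with_imp_property[OF assms]
  by (auto simp: nloops_def)

lemma LP:
  fixes \<gamma> :: "real \<Rightarrow> 'b::metric_space" and d0 :: "'a::euclidean_space"
  assumes retr: "conj_retraction d0 r" and d0: "d0 \<in> sphere 0 1"
    and g: "path \<gamma>" and gX: "path_image \<gamma> \<subseteq> X" and a: "\<alpha> \<in> nloops d0 X (\<gamma> 1)"
  shows "path_conj r \<gamma> \<alpha> \<in> nloops d0 X (\<gamma> 0)"
  using hom_nloops(1)[OF WD[OF retr d0 g gX nloops_refl[OF a]]] .

lemma INV:
  fixes \<gamma> :: "real \<Rightarrow> 'b::metric_space" and d0 :: "'a::euclidean_space"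
  assumes retr: "conj_retraction d0 r" and d0: "d0 \<in> sphere 0 1"
    and g: "path \<gamma>" and gX: "path_image \<gamma> \<subseteq> X" and a: "\<alpha> \<in> nloops d0 X (\<gamma> 1)"
  shows "homotopic_with_canon (\<lambda>f. f d0 = \<gamma> 1) (sphere 0 1) X \<alpha>
           (path_conj r (reversepath \<gamma>) (path_conj r \<gamma> \<alpha>))"
proof -
  let ?S = "sphere (0::'a) 1"
  let ?T = "?S \<times> {0::real} \<union> {d0} \<times> {0..1}"
  note rc = retr_facts(1)[OF retr] and rT = retr_facts(2)[OF retr] and rid = retr_facts(3)[OF retr]
  have ac: "continuous_on ?S \<alpha>" and aX: "\<alpha> ` ?S \<subseteq> X" and ad: "\<alpha> d0 = \<gamma> 1"
    using a by (auto simp: nloops_def)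
  define K where "K = (\<lambda>(l::real). \<alpha>)"
  have Kc: "continuous_on ({0..1}\<times>?S) (\<lambda>(l,u). K l u)"
    unfolding K_def case_prod_beta' by (rule continuous_on_compose2[OF ac]) (auto intro!: continuous_intros)
  have gc: "continuous_on {0..1} \<gamma>" using g by (simp add: path_def)
  have pc: "continuous_on ({0..1} \<times> ?T) (pasteh \<gamma> K)"
    by (rule paste_cont[OF Kc _ gc]) (auto simp: K_def ad)
  define F where "F = (\<lambda>p::'a\<times>real. pasteh \<gamma> K (0, r (fst p, 1 - snd p)))"
  have rT1: "\<exists>u s. r (t, \<sigma>) = (u, s) \<and> ((s = 0 \<and> u \<in> ?S) \<or> (u = d0 \<and> s \<in> {0..1}))"
    if "t \<in> ?S" "\<sigma> \<in> {0..1}" for t \<sigma>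
    using rT[of "(t,\<sigma>)"] that by auto
  have Fc: "continuous_on (?S \<times> {0..1}) F"
    unfolding F_def
  proof (rule continuous_on_compose2[OF pc])
    show "continuous_on (?S \<times> {0..1}) (\<lambda>p::'a\<times>real. (0::real, r (fst p, 1 - snd p)))"
      by (intro continuous_intros continuous_on_compose2[OF rc]) auto
    show "(\<lambda>p::'a\<times>real. (0::real, r (fst p, 1 - snd p))) ` (?S \<times> {0..1}) \<subseteq> {0..1} \<times> ?T"
      using rT by force
  qed
  have FX: "F ` (?S \<times> {0..1}) \<subseteq> X"
  proof clarsimp
    fix t :: 'a and \<sigma> :: real assume t: "norm t = 1" and l: "0 \<le> \<sigma>" "\<sigma> \<le> 1"
    then obtain u s where us: "r (t, 1 - \<sigma>) = (u, s)" and c: "(s = 0 \<and> u \<in> ?S) \<or> (u = d0 \<and> s \<in> {0..1})"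
      using rT1[of t "1 - \<sigma>"] by auto
    show "F (t, \<sigma>) \<in> X"
    proof (cases "s = 0")
      case True
      with c d0 have "u \<in> ?S" by auto
      thus ?thesis using aX True by (force simp: F_def us pasteh_def K_def)
    next
      case False
      with c have "s \<in> {0..1}" by auto
      hence "\<gamma> (1 - s) \<in> path_image \<gamma>" by (auto simp: path_image_def)
      thus ?thesis using gX False by (auto simp: F_def us pasteh_def)
    qed
  qed
  have Fd: "\<forall>\<sigma>\<in>{0..1}. F (d0, \<sigma>) = reversepath \<gamma> (1 - \<sigma>)"
  proof
    fix \<sigma> :: real assume l: "\<sigma> \<in> {0..1}"
    have "r (d0, 1 - \<sigma>) = (d0, 1 - \<sigma>)" using rid l by auto
    thus "F (d0, \<sigma>) = reversepath \<gamma> (1 - \<sigma>)"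
      using ad by (auto simp: F_def pasteh_def K_def reversepath_def)
  qed
  have F0: "\<forall>u\<in>?S. F (u, 0) = path_conj r \<gamma> \<alpha> u"
    by (auto simp: F_def pc_pasteh[where l=0] K_def)
  have "homotopic_with_canon (\<lambda>f. f d0 = reversepath \<gamma> 0) ?S X (\<lambda>t. F (t, 1))
          (path_conj r (reversepath \<gamma>) (path_conj r \<gamma> \<alpha>))"
    by (rule track_lemma[OF retr d0 Fc FX Fd F0])
  moreover have "reversepath \<gamma> 0 = \<gamma> 1" by (simp add: reversepath_def)
  ultimately have h: "homotopic_with_canon (\<lambda>f. f d0 = \<gamma> 1) ?S X (\<lambda>t. F (t, 1))
          (path_conj r (reversepath \<gamma>) (path_conj r \<gamma> \<alpha>))" by simp
  show ?thesis
  proof (rule homotopic_with_eq[OF h])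
    fix x assume "x \<in> topspace (top_of_set ?S)"
    hence x: "x \<in> ?S" by simp
    have "r (x, 0) = (x, 0)" using rid x by auto
    thus "\<alpha> x = F (x, 1)" by (simp add: F_def pasteh_def K_def)
  qed (use d0 in auto)
qed

lemma dist_bdd:
  fixes \<alpha> \<beta> :: "'a::euclidean_space \<Rightarrow> 'b::metric_space"
  assumes "continuous_on (sphere 0 1) \<alpha>" "continuous_on (sphere 0 1) \<beta>"
  shows "bdd_above ((\<lambda>t. dist (\<alpha> t) (\<beta> t)) ` sphere 0 1)"
  by (intro bounded_imp_bdd_above compact_imp_bounded compact_continuous_image
      continuous_on_dist assms compact_sphere)

lemma umetric_nonneg:
  fixes \<alpha> \<beta> :: "'a::euclidean_space \<Rightarrow> 'b::metric_space"
  assumes "continuous_on (sphere 0 1) \<alpha>" "continuous_on (sphere 0 1) \<beta>" "(d0::'a) \<in> sphere 0 1"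
  shows "0 \<le> umetric \<alpha> \<beta>"
proof -
  have "dist (\<alpha> d0) (\<beta> d0) \<le> umetric \<alpha> \<beta>"
    unfolding umetric_def by (rule cSUP_upper[OF assms(3) dist_bdd[OF assms(1,2)]])
  thus ?thesis using zero_le_dist order_trans by blast
qed

lemma MET:
  fixes \<alpha> \<beta> :: "'a::euclidean_space \<Rightarrow> 'b::metric_space"
  assumes retr: "conj_retraction d0 r" and d0: "d0 \<in> sphere 0 1"
    and ac: "continuous_on (sphere 0 1) \<alpha>" and bc: "continuous_on (sphere 0 1) \<beta>"
  shows "umetric (path_conj r \<gamma> \<alpha>) (path_conj r \<gamma> \<beta>) \<le> umetric \<alpha> \<beta>"
  unfolding umetric_def
proof (rule cSUP_least)
  show "sphere (0::'a) 1 \<noteq> {}" using d0 by auto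
next
  fix t :: 'a assume t: "t \<in> sphere 0 1"
  note rT = retr_facts(2)[OF retr]
  obtain u s where us: "r (t, 1) = (u, s)" and c: "(s = 0 \<and> u \<in> sphere 0 1) \<or> (u = d0 \<and> s \<in> {0..1})"
    using rT[of "(t,1)"] t by force
  note B = dist_bdd[OF ac bc]
  show "dist (path_conj r \<gamma> \<alpha> t) (path_conj r \<gamma> \<beta> t) \<le> (SUP t\<in>sphere 0 1. dist (\<alpha> t) (\<beta> t))"
  proof (cases "s = 0")
    case True
    with c d0 have u: "u \<in> sphere 0 1" by auto
    have "dist (\<alpha> u) (\<beta> u) \<le> (SUP t\<in>sphere 0 1. dist (\<alpha> t) (\<beta> t))" by (rule cSUP_upper[OF u B])
    thus ?thesis using True by (simp add: path_conj_def us)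
  next
    case False
    have "dist (\<alpha> d0) (\<beta> d0) \<le> (SUP t\<in>sphere 0 1. dist (\<alpha> t) (\<beta> t))" by (rule cSUP_upper[OF d0 B])
    hence "0 \<le> (SUP t\<in>sphere 0 1. dist (\<alpha> t) (\<beta> t))" using zero_le_dist order_trans by blast
    thus ?thesis using False by (simp add: path_conj_def us)
  qed
qed

lemma rho_le:
  assumes "A \<noteq> {}" "B \<noteq> {}" "\<forall>\<alpha>\<in>A. f \<alpha> \<in> A'" "\<forall>\<beta>\<in>B. f \<beta> \<in> B'"
    "\<forall>\<alpha>\<in>A. \<forall>\<beta>\<in>B. umetric (f \<alpha>) (f \<beta>) \<le> umetric \<alpha> \<beta>"
    "\<forall>\<alpha>\<in>A'. \<forall>\<beta>\<in>B'. 0 \<le> umetric \<alpha> \<beta>"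
  shows "rho A' B' \<le> rho A B"
  unfolding rho_def
proof (rule cInf_mono)
  show "{umetric \<alpha> \<beta> |\<alpha> \<beta>. \<alpha> \<in> A \<and> \<beta> \<in> B} \<noteq> {}" using assms(1,2) by blast
  show "bdd_below {umetric \<alpha> \<beta> |\<alpha> \<beta>. \<alpha> \<in> A' \<and> \<beta> \<in> B'}"
    using assms(6) by (auto intro!: bdd_belowI[where m=0])
  fix x assume "x \<in> {umetric \<alpha> \<beta> |\<alpha> \<beta>. \<alpha> \<in> A \<and> \<beta> \<in> B}"
  then obtain \<alpha> \<beta> where x: "x = umetric \<alpha> \<beta>" "\<alpha> \<in> A" "\<beta> \<in> B" by blast
  show "\<exists>a\<in>{umetric \<alpha> \<beta> |\<alpha> \<beta>. \<alpha> \<in> A' \<and> \<beta> \<in> B'}. a \<le> x"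
    using x assms(3,4,5) by blast
qed

lemma class_hom:
  assumes "x \<in> nclass d0 X c y" "z \<in> nclass d0 X c y"
  shows "homotopic_with_canon (\<lambda>f. f d0 = c) (sphere 0 1) X x z"
  using assms unfolding nclass_def by (blast intro: homotopic_with_trans homotopic_with_symD)

theorem proposition4p11:
  fixes X :: "'b::metric_space set" and \<gamma> :: "real \<Rightarrow> 'b"
    and d0 :: "'a::euclidean_space" and r :: "'a \<times> real \<Rightarrow> 'a \<times> real"
  assumes "DIM('a) \<ge> 2"
    and "d0 \<in> Basis"
    and "path_connected X"
    and "path \<gamma>" and "path_image \<gamma> \<subseteq> X"
    and "conj_retraction d0 r"
    and "a \<in> pi_n d0 X (\<gamma> 1)" and "b \<in> pi_n d0 X (\<gamma> 1)"
  shows "rho (change_basepoint d0 X r \<gamma> a) (change_basepoint d0 X r \<gamma> b) = rho a b"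
proof -
  note retr = assms(6) and g = assms(4) and gX = assms(5)
  have d0: "d0 \<in> sphere 0 1" using assms(2) by simp
  define \<delta> where "\<delta> = reversepath \<gamma>"
  have dg: "path \<delta>" "path_image \<delta> \<subseteq> X" "\<delta> 0 = \<gamma> 1" "\<delta> 1 = \<gamma> 0"
    using g gX by (auto simp: \<delta>_def) (simp_all add: reversepath_def)
  have cls: "\<exists>\<alpha>0. \<alpha>0 \<in> c \<and>
      (\<forall>\<alpha>\<in>c. path_conj r \<gamma> \<alpha> \<in> nclass d0 X (\<gamma> 0) (path_conj r \<gamma> \<alpha>0)) \<and>
      (\<forall>\<alpha>'\<in>nclass d0 X (\<gamma> 0) (path_conj r \<gamma> \<alpha>0). path_conj r \<delta> \<alpha>' \<in> c) \<and>
      (\<forall>\<alpha>\<in>c. continuous_on (sphere 0 1) \<alpha>) \<and>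
      (\<forall>\<alpha>\<in>nclass d0 X (\<gamma> 0) (path_conj r \<gamma> \<alpha>0). continuous_on (sphere 0 1) \<alpha>) \<and>
      change_basepoint d0 X r \<gamma> c = nclass d0 X (\<gamma> 0) (path_conj r \<gamma> \<alpha>0)"
    if c: "c \<in> pi_n d0 X (\<gamma> 1)" for c
  proof -
    obtain \<alpha>1 where a1: "\<alpha>1 \<in> nloops d0 X (\<gamma> 1)" and ceq: "c = nclass d0 X (\<gamma> 1) \<alpha>1"
      using c by (auto simp: pi_n_def)
    have "\<alpha>1 \<in> c" using a1 nloops_refl[OF a1] by (simp add: ceq nclass_def)
    define \<alpha>0 where "\<alpha>0 = (SOME \<beta>. \<beta> \<in> c)"
    have a0: "\<alpha>0 \<in> c" unfolding \<alpha>0_def using \<open>\<alpha>1 \<in> c\<close> by (rule someI[where P="\<lambda>\<beta>. \<beta> \<in> c"])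
    have a0l: "\<alpha>0 \<in> nloops d0 X (\<gamma> 1)" using a0 by (simp add: ceq nclass_def)
    show ?thesis
    proof (intro exI conjI ballI)
      show "\<alpha>0 \<in> c" by fact
    next
      fix \<alpha> assume a: "\<alpha> \<in> c"
      have h: "homotopic_with_canon (\<lambda>f. f d0 = \<gamma> 1) (sphere 0 1) X \<alpha>0 \<alpha>"
        using class_hom a0 a ceq by blast
      show "path_conj r \<gamma> \<alpha> \<in> nclass d0 X (\<gamma> 0) (path_conj r \<gamma> \<alpha>0)"
        using WD[OF retr d0 g gX h] hom_nloops(2)[OF WD[OF retr d0 g gX h]]
        by (simp add: nclass_def)
    next
      fix \<alpha>' assume a': "\<alpha>' \<in> nclass d0 X (\<gamma> 0) (path_conj r \<gamma> \<alpha>0)"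
      have h: "homotopic_with_canon (\<lambda>f. f d0 = \<delta> 1) (sphere 0 1) X (path_conj r \<gamma> \<alpha>0) \<alpha>'"
        using a' dg by (simp add: nclass_def)
      have h2: "homotopic_with_canon (\<lambda>f. f d0 = \<gamma> 1) (sphere 0 1) X
                 (path_conj r \<delta> (path_conj r \<gamma> \<alpha>0)) (path_conj r \<delta> \<alpha>')"
        using WD[OF retr d0 dg(1,2) h] dg by simp
      have h3: "homotopic_with_canon (\<lambda>f. f d0 = \<gamma> 1) (sphere 0 1) X \<alpha>0 (path_conj r \<delta> (path_conj r \<gamma> \<alpha>0))"
        using INV[OF retr d0 g gX a0l] by (simp add: \<delta>_def)
      have h4: "homotopic_with_canon (\<lambda>f. f d0 = \<gamma> 1) (sphere 0 1) X \<alpha>1 \<alpha>0"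
        using a0 by (simp add: ceq nclass_def)
      have h5: "homotopic_with_canon (\<lambda>f. f d0 = \<gamma> 1) (sphere 0 1) X \<alpha>1 (path_conj r \<delta> \<alpha>')"
        using homotopic_with_trans[OF h4 homotopic_with_trans[OF h3 h2]] .
      show "path_conj r \<delta> \<alpha>' \<in> c"
        using h5 hom_nloops(2)[OF h5] by (simp add: ceq nclass_def)
    next
      fix \<alpha> assume "\<alpha> \<in> c" thus "continuous_on (sphere 0 1) \<alpha>"
        by (simp add: ceq nclass_def nloops_def)
    next
      fix \<alpha> assume "\<alpha> \<in> nclass d0 X (\<gamma> 0) (path_conj r \<gamma> \<alpha>0)" thus "continuous_on (sphere 0 1) \<alpha>"
        by (simp add: nclass_def nloops_def)
    next
      show "change_basepoint d0 X r \<gamma> c = nclass d0 X (\<gamma> 0) (path_conj r \<gamma> \<alpha>0)"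
        by (simp add: change_basepoint_def \<alpha>0_def)
    qed
  qed
  obtain \<alpha>0 where A: "\<alpha>0 \<in> a"
      "\<forall>\<alpha>\<in>a. path_conj r \<gamma> \<alpha> \<in> nclass d0 X (\<gamma> 0) (path_conj r \<gamma> \<alpha>0)"
      "\<forall>\<alpha>'\<in>nclass d0 X (\<gamma> 0) (path_conj r \<gamma> \<alpha>0). path_conj r \<delta> \<alpha>' \<in> a"
      "\<forall>\<alpha>\<in>a. continuous_on (sphere 0 1) \<alpha>"
      "\<forall>\<alpha>\<in>nclass d0 X (\<gamma> 0) (path_conj r \<gamma> \<alpha>0). continuous_on (sphere 0 1) \<alpha>"
      "change_basepoint d0 X r \<gamma> a = nclass d0 X (\<gamma> 0) (path_conj r \<gamma> \<alpha>0)"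
    using cls[OF assms(7)] by blast
  obtain \<beta>0 where B: "\<beta>0 \<in> b"
      "\<forall>\<alpha>\<in>b. path_conj r \<gamma> \<alpha> \<in> nclass d0 X (\<gamma> 0) (path_conj r \<gamma> \<beta>0)"
      "\<forall>\<alpha>'\<in>nclass d0 X (\<gamma> 0) (path_conj r \<gamma> \<beta>0). path_conj r \<delta> \<alpha>' \<in> b"
      "\<forall>\<alpha>\<in>b. continuous_on (sphere 0 1) \<alpha>"
      "\<forall>\<alpha>\<in>nclass d0 X (\<gamma> 0) (path_conj r \<gamma> \<beta>0). continuous_on (sphere 0 1) \<alpha>"
      "change_basepoint d0 X r \<gamma> b = nclass d0 X (\<gamma> 0) (path_conj r \<gamma> \<beta>0)"
    using cls[OF assms(8)] by blast
  let ?A = "nclass d0 X (\<gamma> 0) (path_conj r \<gamma> \<alpha>0)"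
  let ?B = "nclass d0 X (\<gamma> 0) (path_conj r \<gamma> \<beta>0)"
  have neA: "?A \<noteq> {}" using A(1,2) by blast
  have neB: "?B \<noteq> {}" using B(1,2) by blast
  have le1: "rho ?A ?B \<le> rho a b"
    by (rule rho_le[where f="path_conj r \<gamma>"])
       (use A B MET[OF retr d0] umetric_nonneg[OF _ _ d0] in blast)+
  have le2: "rho a b \<le> rho ?A ?B"
    by (rule rho_le[where f="path_conj r \<delta>", OF neA neB])
       (use A B MET[OF retr d0] umetric_nonneg[OF _ _ d0] in blast)+
  show ?thesis using le1 le2 A(6) B(6) by simp
qed

end
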